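(* Let $\Pi$ be a cGAP whose VC rule has size $m$. For each function $\sigma$ assigning to every ground VC-rule instance $B_1(v),\dots,B_m(v)\hookleftarrow A_1(v),\dots,A_m(v)$ of $\Pi$ an index $\sigma(v)\in\{1,\dots,m\}$, let $\Pi'_\sigma$ be the ground GAP consisting of all ground non-VC rules of $\Pi$ together with the rules $B_{\sigma(v)}(v):\mu\leftarrow A_{\sigma(v)}(v):\mu$, one for each ground VC-rule instance. Then an interpretation $I$ is a coherent model of $\Pi$ if and only if there exists such a $\sigma$ with $I=\mathcal{MM}(\Pi'_\sigma)$ and $I$ satisfies every ground VC-rule instance of $\Pi$.
   Context: Fix disjoint sets of unary vertex predicate symbols and binary edge predicate symbols; constants are the vertices of a finite social network. An annotation is an element of $[0,1]$, an annotation variable (ranging over $[0,1]$), or $f(t_1,\dots,t_k)$ for an annotation function symbol $f$ denoting a fixed function $[0,1]^k\to[0,1]$ and annotations $t_i$. An annotated atom is $A:\mu$ with $A$ an atom and $\mu$ an annotation; an annotated (GAP) rule has the form $A_0:f(\mu_1,\dots,\mu_n)\leftarrow A_1:\mu_1,\dots,A_n:\mu_n$ ($n=0$: a fact); a GAP is a finite set of such rules. A vertex choice (VC) rule of size $m$ is $b_1(X),\dots,b_m(X)\hookleftarrow a_1(X),\dots,a_m(X)$ with $a_i,b_i$ vertex predicate symbols; its ground instance for vertex $v$ is $b_1(v),\dots,b_m(v)\hookleftarrow a_1(v),\dots,a_m(v)$. A choice GAP (cGAP) $\Pi$ is a finite set of annotated rules plus exactly one VC rule. An interpretation is a map $I$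 from ground atoms to $[0,1]$, ordered pointwise ($I_1\preceq I_2$ iff $I_1(A)\le I_2(A)$ for all $A$). $I\models A:\mu$ iff $I(A)\ge\mu$; $I$ satisfies a ground annotated rule iff $I(A_0)$ is at least the head annotation or some body annotated atom is not satisfied; $I$ satisfies a ground VC rule $B_1,\dots,B_m\hookleftarrow A_1,\dots,A_m$ iff there is $i$ with $I(B_i)=I(A_i)$ and $I(B_j)=0$ for all $j\neq i$; a non-ground rule is satisfied iff all its ground instances are; a model of $\Pi$ satisfies all its rules. Every GAP $P$ has a unique $\preceq$-minimal model, denoted $\mathcal{MM}(P)$ (the least fixpoint of its immediate-consequence operator). Coherence transform: for an interpretation $I$, ${\rm coh}(\Pi,I)$ is the GAP consisting of all ground non-VC rules of $\Pi$ together with, for each ground VC-rule instance $B_1(v),\dots,B_m(v)\hookleftarrow A_1(v),\dots,A_m(v)$ and each $i$ with $I(A_i(v))>0$ and $I(A_i(v))=I(B_i(v))$, the rule $B_i(v):\mu\leftarrow A_i(v):\mu$. A model $M$ of $\Pi$ is coherent iff $M=\mathcal{MM}({\rm coh}(\Pi,M))$. *)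

theory Defs
  imports Main "HOL.Real"
begin

datatype 'v vterm = TVar nat | TCst 'v

text \<open>Atoms; vertex predicate symbols of type 'vp and edge predicate symbols of
type 'ep (disjoint by typing). 'c is the argument type: 'v vterm for non-ground
atoms, 'v for ground atoms.\<close>
datatype ('vp, 'ep, 'c) atom = VAtom 'vp 'c | EAtom 'ep 'c 'c

text \<open>Annotations: constants, annotation variables, or annotation function
symbols (given directly by the function they denote) applied to annotations.\<close>
datatype annot = AConst real | AVar nat | AFun "real list \<Rightarrow> real" "annot list"

fun aeval :: "(nat \<Rightarrow> real) \<Rightarrow> annot \<Rightarrow> real" where
  "aeval \<nu> (AConst c) = c"
| "aeval \<nu> (AVar n) = \<nu> n"
| "aeval \<nu> (AFun f ts) = f (map (aeval \<nu>) ts)"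

fun wf_annot :: "annot \<Rightarrow> bool" where
  "wf_annot (AConst c) \<longleftrightarrow> 0 \<le> c \<and> c \<le> 1"
| "wf_annot (AVar n) \<longleftrightarrow> True"
| "wf_annot (AFun f ts) \<longleftrightarrow>
     (\<forall>xs. length xs = length ts \<longrightarrow> (\<forall>x\<in>set xs. 0 \<le> x \<and> x \<le> 1)
            \<longrightarrow> 0 \<le> f xs \<and> f xs \<le> 1) \<and> (\<forall>t\<in>set ts. wf_annot t)"

text \<open>Annotated rule  head : hann \<leftarrow> B1 : mu1, ..., Bn : mun  (n = 0: a fact).\<close>
datatype 'a arule = ARule (rhead: 'a) (rhann: annot) (rbody: "('a \<times> annot) list")

type_synonym ('vp, 'ep, 'v) gatom = "('vp, 'ep, 'v) atom"
type_synonym ('vp, 'ep, 'v) grule = "('vp, 'ep, 'v) gatom arule"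
type_synonym ('vp, 'ep, 'v) gap = "('vp, 'ep, 'v) grule set"
type_synonym ('vp, 'ep, 'v) interp = "('vp, 'ep, 'v) gatom \<Rightarrow> real"

text \<open>A cGAP: a finite set of (possibly non-ground) annotated rules plus exactly one
VC rule  b1(X),...,bm(X) \<hookleftarrow> a1(X),...,am(X), given as the list [(b1,a1),...,(bm,am)].\<close>
record ('vp, 'ep, 'v) cgap =
  arules :: "('vp, 'ep, 'v vterm) atom arule set"
  vcrule :: "('vp \<times> 'vp) list"

definition vc_size :: "('vp, 'ep, 'v) cgap \<Rightarrow> nat" where
  "vc_size \<Pi> = length (vcrule \<Pi>)"

definition wf_rule :: "'a arule \<Rightarrow> bool" where
  "wf_rule r \<longleftrightarrow> wf_annot (rhann r) \<and> (\<forall>(B, \<mu>)\<in>set (rbody r). wf_annot \<mu>)"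

definition wf_cgap :: "('vp, 'ep, 'v) cgap \<Rightarrow> bool" where
  "wf_cgap \<Pi> \<longleftrightarrow> finite (arules \<Pi>) \<and> (\<forall>r\<in>arules \<Pi>. wf_rule r)"

fun inst_term :: "(nat \<Rightarrow> 'v) \<Rightarrow> 'v vterm \<Rightarrow> 'v" where
  "inst_term \<theta> (TVar n) = \<theta> n"
| "inst_term \<theta> (TCst c) = c"

definition ground_rule :: "(nat \<Rightarrow> 'v) \<Rightarrow> ('vp, 'ep, 'v vterm) atom arule \<Rightarrow> ('vp, 'ep, 'v) grule" where
  "ground_rule \<theta> r = map_arule (map_atom id id (inst_term \<theta>)) r"

definition ground_rules :: "('vp, 'ep, 'v) cgap \<Rightarrow> ('vp, 'ep, 'v) gap" where
  "ground_rules \<Pi> = {ground_rule \<theta> r | \<theta> r. r \<in> arules \<Pi>}"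

definition is_interp :: "('vp, 'ep, 'v) interp \<Rightarrow> bool" where
  "is_interp I \<longleftrightarrow> (\<forall>A. 0 \<le> I A \<and> I A \<le> 1)"

definition sat_rule :: "('vp, 'ep, 'v) interp \<Rightarrow> ('vp, 'ep, 'v) grule \<Rightarrow> bool" where
  "sat_rule I r \<longleftrightarrow> (\<forall>\<nu>. (\<forall>n. 0 \<le> \<nu> n \<and> \<nu> n \<le> 1) \<longrightarrow>
       (\<forall>(B, \<mu>)\<in>set (rbody r). I B \<ge> aeval \<nu> \<mu>) \<longrightarrow> I (rhead r) \<ge> aeval \<nu> (rhann r))"

definition gap_model :: "('vp, 'ep, 'v) gap \<Rightarrow> ('vp, 'ep, 'v) interp \<Rightarrow> bool" where
  "gap_model P I \<longleftrightarrow> is_interp I \<and> (\<forall>r\<in>P. sat_rule I r)"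

definition MM :: "('vp, 'ep, 'v) gap \<Rightarrow> ('vp, 'ep, 'v) interp" where
  "MM P = (THE M. gap_model P M \<and> (\<forall>I. gap_model P I \<longrightarrow> (\<forall>A. M A \<le> I A)))"

text \<open>Satisfaction of the ground VC-rule instance for vertex v (indices 0-based).\<close>
definition sat_vc_inst :: "('vp, 'ep, 'v) interp \<Rightarrow> ('vp \<times> 'vp) list \<Rightarrow> 'v \<Rightarrow> bool" where
  "sat_vc_inst I vc v \<longleftrightarrow>
     (\<exists>i<length vc. I (VAtom (fst (vc ! i)) v) = I (VAtom (snd (vc ! i)) v) \<and>
        (\<forall>j<length vc. j \<noteq> i \<longrightarrow> I (VAtom (fst (vc ! j)) v) = 0))"

definition cgap_model :: "('vp, 'ep, 'v) cgap \<Rightarrow> ('vp, 'ep, 'v) interp \<Rightarrow> bool" where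
  "cgap_model \<Pi> I \<longleftrightarrow> gap_model (ground_rules \<Pi>) I \<and> (\<forall>v. sat_vc_inst I (vcrule \<Pi>) v)"

definition copy_rule :: "'vp \<Rightarrow> 'vp \<Rightarrow> 'v \<Rightarrow> ('vp, 'ep, 'v) grule" where
  "copy_rule b a v = ARule (VAtom b v) (AVar 0) [(VAtom a v, AVar 0)]"

definition coh :: "('vp, 'ep, 'v) cgap \<Rightarrow> ('vp, 'ep, 'v) interp \<Rightarrow> ('vp, 'ep, 'v) gap" where
  "coh \<Pi> I = ground_rules \<Pi> \<union>
     {copy_rule (fst (vcrule \<Pi> ! i)) (snd (vcrule \<Pi> ! i)) v | v i.
        i < length (vcrule \<Pi>) \<and> I (VAtom (snd (vcrule \<Pi> ! i)) v) > 0 \<and>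
        I (VAtom (snd (vcrule \<Pi> ! i)) v) = I (VAtom (fst (vcrule \<Pi> ! i)) v)}"

definition coherent_model :: "('vp, 'ep, 'v) cgap \<Rightarrow> ('vp, 'ep, 'v) interp \<Rightarrow> bool" where
  "coherent_model \<Pi> M \<longleftrightarrow> cgap_model \<Pi> M \<and> M = MM (coh \<Pi> M)"

text \<open>\<Pi>'_sigma for a choice sigma of an index (0-based, < m) for every vertex.\<close>
definition Pi_sigma :: "('vp, 'ep, 'v) cgap \<Rightarrow> ('v \<Rightarrow> nat) \<Rightarrow> ('vp, 'ep, 'v) gap" where
  "Pi_sigma \<Pi> \<sigma> = ground_rules \<Pi> \<union>
     {copy_rule (fst (vcrule \<Pi> ! \<sigma> v)) (snd (vcrule \<Pi> ! \<sigma> v)) v | v. True}"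

end

theory Submission
  imports Defs
begin

lemma aeval_bounds:
  "wf_annot t \<Longrightarrow> (\<forall>n. 0 \<le> \<nu> n \<and> \<nu> n \<le> 1) \<Longrightarrow> 0 \<le> aeval \<nu> t \<and> aeval \<nu> t \<le> 1"
proof (induction \<nu> t rule: aeval.induct)
  case (3 \<nu> f ts)
  have "\<forall>x\<in>set (map (aeval \<nu>) ts). 0 \<le> x \<and> x \<le> 1" using 3 by auto
  then show ?case using 3(2) by (simp del: set_map)
qed auto

definition hok :: "('vp,'ep,'v) grule \<Rightarrow> bool" where
  "hok r \<longleftrightarrow> (\<forall>\<nu>. (\<forall>n. 0 \<le> \<nu> n \<and> \<nu> n \<le> 1) \<longrightarrow> aeval \<nu> (rhann r) \<le> 1)"

lemma MM_props:
  assumes h: "\<forall>r\<in>P. hok r"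
  shows "gap_model P (MM P)" and "gap_model P I \<Longrightarrow> MM P A \<le> I A"
proof -
  define M where "M = (\<lambda>A. Inf {I A | I. gap_model P I})"
  have one: "gap_model P (\<lambda>_. 1)"
    using h unfolding gap_model_def is_interp_def sat_rule_def hok_def by auto
  have ne: "\<And>A. {I A | I. gap_model P I} \<noteq> {}" using one by blast
  have bdd: "\<And>A. bdd_below {I A | I. gap_model P I}"
    unfolding bdd_below_def gap_model_def is_interp_def by blast
  have low: "\<And>I A. gap_model P I \<Longrightarrow> M A \<le> I A"
    unfolding M_def by (rule cInf_lower[OF _ bdd]) blast
  have mod: "gap_model P M"
    unfolding gap_model_def
  proof (intro conjI ballI)
    show "is_interp M" unfolding is_interp_def
    proof
      fix A
      have "0 \<le> M A" unfolding M_def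
        by (rule cInf_greatest[OF ne]) (auto simp: gap_model_def is_interp_def)
      moreover have "M A \<le> 1" using low[OF one] .
      ultimately show "0 \<le> M A \<and> M A \<le> 1" by simp
    qed
  next
    fix r assume r: "r \<in> P"
    show "sat_rule M r" unfolding sat_rule_def
    proof (intro allI impI)
      fix \<nu> assume nu: "\<forall>n. 0 \<le> \<nu> n \<and> \<nu> n \<le> 1"
        and b: "\<forall>(B, \<mu>)\<in>set (rbody r). aeval \<nu> \<mu> \<le> M B"
      show "aeval \<nu> (rhann r) \<le> M (rhead r)" unfolding M_def
      proof (rule cInf_greatest[OF ne])
        fix x assume "x \<in> {I (rhead r) | I. gap_model P I}"
        then obtain I where I: "gap_model P I" "x = I (rhead r)" by blast
        have "\<forall>(B, \<mu>)\<in>set (rbody r). aeval \<nu> \<mu> \<le> I B"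
        proof (intro ballI)
          fix p assume "p \<in> set (rbody r)"
          then show "case p of (B, \<mu>) \<Rightarrow> aeval \<nu> \<mu> \<le> I B"
            using b low[OF I(1)] by (cases p) (auto intro: order_trans)
        qed
        then show "aeval \<nu> (rhann r) \<le> x" using I r nu
          unfolding gap_model_def sat_rule_def by blast
      qed
    qed
  qed
  have eq: "MM P = M" unfolding MM_def
  proof (rule the_equality)
    show "gap_model P M \<and> (\<forall>I. gap_model P I \<longrightarrow> (\<forall>A. M A \<le> I A))" using mod low by blast
  next
    fix M' assume "gap_model P M' \<and> (\<forall>I. gap_model P I \<longrightarrow> (\<forall>A. M' A \<le> I A))"
    then show "M' = M" using mod low by (intro ext antisym) auto
  qed
  show "gap_model P (MM P)" using eq mod by simp
  show "gap_model P I \<Longrightarrow> MM P A \<le> I A" using eq low by simp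
qed

lemma gap_model_mono: "gap_model P I \<Longrightarrow> P' \<subseteq> P \<Longrightarrow> gap_model P' I"
  unfolding gap_model_def by blast

lemma sat_copy:
  assumes "is_interp I"
  shows "sat_rule I (copy_rule b a v) \<longleftrightarrow> I (VAtom a v) \<le> I (VAtom b v)"
proof
  assume s: "sat_rule I (copy_rule b a v)"
  show "I (VAtom a v) \<le> I (VAtom b v)"
    using s[unfolded sat_rule_def copy_rule_def, rule_format, of "\<lambda>_. I (VAtom a v)"] assms
    unfolding is_interp_def by simp
next
  assume "I (VAtom a v) \<le> I (VAtom b v)"
  then show "sat_rule I (copy_rule b a v)" unfolding sat_rule_def copy_rule_def by auto
qed

lemma hok_ground:
  assumes "wf_cgap \<Pi>" "r \<in> ground_rules \<Pi>" shows "hok r"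
proof -
  obtain \<theta> r0 where r: "r = ground_rule \<theta> r0" "r0 \<in> arules \<Pi>"
    using assms(2) unfolding ground_rules_def by blast
  have "wf_annot (rhann r0)" using assms(1) r(2) unfolding wf_cgap_def wf_rule_def by blast
  moreover have "rhann r = rhann r0" using r(1) unfolding ground_rule_def by (cases r0) simp
  ultimately show ?thesis unfolding hok_def using aeval_bounds by metis
qed

lemma hok_copy: "hok (copy_rule b a v)"
  unfolding hok_def copy_rule_def by simp

lemma hok_sigma: "wf_cgap \<Pi> \<Longrightarrow> \<forall>r\<in>Pi_sigma \<Pi> \<sigma>. hok r"
  unfolding Pi_sigma_def using hok_ground hok_copy by auto

lemma hok_coh: "wf_cgap \<Pi> \<Longrightarrow> \<forall>r\<in>coh \<Pi> I. hok r"
  unfolding coh_def using hok_ground hok_copy by auto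

theorem mainTheorem1:
  fixes \<Pi> :: "('vp, 'ep, 'v::finite) cgap" and I :: "('vp, 'ep, 'v) interp"
  assumes "wf_cgap \<Pi>" and "is_interp I"
  shows "coherent_model \<Pi> I \<longleftrightarrow>
    (\<exists>\<sigma>. (\<forall>v. \<sigma> v < vc_size \<Pi>) \<and> I = MM (Pi_sigma \<Pi> \<sigma>) \<and>
          (\<forall>v. sat_vc_inst I (vcrule \<Pi>) v))"
proof
  assume c: "coherent_model \<Pi> I"
  hence cm: "cgap_model \<Pi> I" and Ieq: "I = MM (coh \<Pi> I)" unfolding coherent_model_def by auto
  hence sv: "\<forall>v. sat_vc_inst I (vcrule \<Pi>) v" unfolding cgap_model_def by auto
  hence "\<forall>v. \<exists>i. i < length (vcrule \<Pi>) \<and>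
      I (VAtom (fst (vcrule \<Pi> ! i)) v) = I (VAtom (snd (vcrule \<Pi> ! i)) v) \<and>
      (\<forall>j<length (vcrule \<Pi>). j \<noteq> i \<longrightarrow> I (VAtom (fst (vcrule \<Pi> ! j)) v) = 0)"
    unfolding sat_vc_inst_def by blast
  from choice[OF this] obtain \<sigma> where \<sigma>': "\<forall>v. \<sigma> v < length (vcrule \<Pi>) \<and>
      I (VAtom (fst (vcrule \<Pi> ! \<sigma> v)) v) = I (VAtom (snd (vcrule \<Pi> ! \<sigma> v)) v) \<and>
      (\<forall>j<length (vcrule \<Pi>). j \<noteq> \<sigma> v \<longrightarrow> I (VAtom (fst (vcrule \<Pi> ! j)) v) = 0)" by blast
  hence \<sigma>: "\<And>v. \<sigma> v < length (vcrule \<Pi>) \<and>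
      I (VAtom (fst (vcrule \<Pi> ! \<sigma> v)) v) = I (VAtom (snd (vcrule \<Pi> ! \<sigma> v)) v) \<and>
      (\<forall>j<length (vcrule \<Pi>). j \<noteq> \<sigma> v \<longrightarrow> I (VAtom (fst (vcrule \<Pi> ! j)) v) = 0)" by blast
  let ?Ps = "Pi_sigma \<Pi> \<sigma>"
  have sub: "coh \<Pi> I \<subseteq> ?Ps"
  proof
    fix r assume "r \<in> coh \<Pi> I"
    then consider "r \<in> ground_rules \<Pi>" | v i where "r = copy_rule (fst (vcrule \<Pi> ! i)) (snd (vcrule \<Pi> ! i)) v"
        "i < length (vcrule \<Pi>)" "I (VAtom (snd (vcrule \<Pi> ! i)) v) > 0"
        "I (VAtom (snd (vcrule \<Pi> ! i)) v) = I (VAtom (fst (vcrule \<Pi> ! i)) v)"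
      unfolding coh_def by blast
    then show "r \<in> ?Ps"
    proof cases
      case 1 then show ?thesis unfolding Pi_sigma_def by blast
    next
      case (2 v i)
      have "i = \<sigma> v"
      proof (rule ccontr)
        assume "i \<noteq> \<sigma> v"
        hence "I (VAtom (fst (vcrule \<Pi> ! i)) v) = 0" using \<sigma>[of v] 2(2) by blast
        then show False using 2(3,4) by simp
      qed
      then show ?thesis using 2 unfolding Pi_sigma_def by blast
    qed
  qed
  have IPs: "gap_model ?Ps I"
    unfolding gap_model_def
  proof (intro conjI ballI)
    show "is_interp I" by fact
    fix r assume "r \<in> ?Ps"
    then consider "r \<in> ground_rules \<Pi>" | v where "r = copy_rule (fst (vcrule \<Pi> ! \<sigma> v)) (snd (vcrule \<Pi> ! \<sigma> v)) v"
      unfolding Pi_sigma_def by blast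
    then show "sat_rule I r"
    proof cases
      case 1 then show ?thesis using cm unfolding cgap_model_def gap_model_def by blast
    next
      case (2 v) then show ?thesis using sat_copy[OF assms(2)] \<sigma>[of v] by simp
    qed
  qed
  have m1: "gap_model ?Ps (MM ?Ps)" using MM_props(1)[OF hok_sigma[OF assms(1)]] .
  have "I = MM ?Ps"
  proof (intro ext antisym)
    fix A
    show "MM ?Ps A \<le> I A" using MM_props(2)[OF hok_sigma[OF assms(1)] IPs] .
    have "MM (coh \<Pi> I) A \<le> MM ?Ps A"
      using MM_props(2)[OF hok_coh[OF assms(1)] gap_model_mono[OF m1 sub]] .
    then show "I A \<le> MM ?Ps A" by (simp only: Ieq[symmetric])
  qed
  then show "\<exists>\<sigma>. (\<forall>v. \<sigma> v < vc_size \<Pi>) \<and> I = MM (Pi_sigma \<Pi> \<sigma>) \<and>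
          (\<forall>v. sat_vc_inst I (vcrule \<Pi>) v)"
  proof (intro exI[of _ \<sigma>] conjI)
    show "\<forall>v. \<sigma> v < vc_size \<Pi>" unfolding vc_size_def using \<sigma> by blast
  qed (assumption, use sv in blast)
next
  assume "\<exists>\<sigma>. (\<forall>v. \<sigma> v < vc_size \<Pi>) \<and> I = MM (Pi_sigma \<Pi> \<sigma>) \<and>
          (\<forall>v. sat_vc_inst I (vcrule \<Pi>) v)"
  then obtain \<sigma> where \<sigma>: "\<And>v. \<sigma> v < length (vcrule \<Pi>)" and Ieq: "I = MM (Pi_sigma \<Pi> \<sigma>)"
    and sv: "\<And>v. sat_vc_inst I (vcrule \<Pi>) v" unfolding vc_size_def by blast
  let ?Ps = "Pi_sigma \<Pi> \<sigma>"
  have IPs: "gap_model ?Ps I" using MM_props(1)[OF hok_sigma[OF assms(1)]] Ieq by simp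
  have cm: "cgap_model \<Pi> I" unfolding cgap_model_def
    using gap_model_mono[OF IPs] sv unfolding Pi_sigma_def by blast
  have Icoh: "gap_model (coh \<Pi> I) I"
    unfolding gap_model_def
  proof (intro conjI ballI)
    show "is_interp I" by fact
    fix r assume "r \<in> coh \<Pi> I"
    then consider "r \<in> ground_rules \<Pi>" | v i where "r = copy_rule (fst (vcrule \<Pi> ! i)) (snd (vcrule \<Pi> ! i)) v"
        "I (VAtom (snd (vcrule \<Pi> ! i)) v) = I (VAtom (fst (vcrule \<Pi> ! i)) v)"
      unfolding coh_def by blast
    then show "sat_rule I r"
    proof cases
      case 1 then show ?thesis using cm unfolding cgap_model_def gap_model_def by blast
    next
      case (2 v i) then show ?thesis using sat_copy[OF assms(2)] by simp
    qed
  qed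
  define J where "J = MM (coh \<Pi> I)"
  have Jm: "gap_model (coh \<Pi> I) J" unfolding J_def using MM_props(1)[OF hok_coh[OF assms(1)]] .
  have JI: "\<And>A. J A \<le> I A" unfolding J_def using MM_props(2)[OF hok_coh[OF assms(1)] Icoh] .
  have key: "\<And>v. I (VAtom (snd (vcrule \<Pi> ! \<sigma> v)) v) = 0 \<or>
      (I (VAtom (snd (vcrule \<Pi> ! \<sigma> v)) v) > 0 \<and>
       I (VAtom (snd (vcrule \<Pi> ! \<sigma> v)) v) = I (VAtom (fst (vcrule \<Pi> ! \<sigma> v)) v))"
  proof -
    fix v
    have "copy_rule (fst (vcrule \<Pi> ! \<sigma> v)) (snd (vcrule \<Pi> ! \<sigma> v)) v \<in> ?Ps"
      unfolding Pi_sigma_def by blast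
    hence le: "I (VAtom (snd (vcrule \<Pi> ! \<sigma> v)) v) \<le> I (VAtom (fst (vcrule \<Pi> ! \<sigma> v)) v)"
      using IPs sat_copy[OF assms(2)] unfolding gap_model_def by blast
    obtain i where i: "i < length (vcrule \<Pi>)"
      "I (VAtom (fst (vcrule \<Pi> ! i)) v) = I (VAtom (snd (vcrule \<Pi> ! i)) v)"
      "\<forall>j<length (vcrule \<Pi>). j \<noteq> i \<longrightarrow> I (VAtom (fst (vcrule \<Pi> ! j)) v) = 0"
      using sv[of v] unfolding sat_vc_inst_def by blast
    have nn: "0 \<le> I (VAtom (snd (vcrule \<Pi> ! \<sigma> v)) v)" using assms(2) unfolding is_interp_def by blast
    show "?thesis v"
    proof (cases "I (VAtom (snd (vcrule \<Pi> ! \<sigma> v)) v) = 0")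
      case False
      hence pos: "I (VAtom (snd (vcrule \<Pi> ! \<sigma> v)) v) > 0" using nn by simp
      have "\<sigma> v = i"
      proof (rule ccontr)
        assume "\<sigma> v \<noteq> i"
        hence "I (VAtom (fst (vcrule \<Pi> ! \<sigma> v)) v) = 0" using i(3) \<sigma>[of v] by blast
        then show False using pos le by simp
      qed
      then show ?thesis using pos i(2) by simp
    qed simp
  qed
  have JPs: "gap_model ?Ps J"
    unfolding gap_model_def
  proof (intro conjI ballI)
    show iJ: "is_interp J" using Jm unfolding gap_model_def by blast
    fix r assume "r \<in> ?Ps"
    then consider "r \<in> ground_rules \<Pi>" | v where "r = copy_rule (fst (vcrule \<Pi> ! \<sigma> v)) (snd (vcrule \<Pi> ! \<sigma> v)) v"
      unfolding Pi_sigma_def by blast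
    then show "sat_rule J r"
    proof cases
      case 1 then show ?thesis using Jm unfolding gap_model_def coh_def by blast
    next
      case (2 v)
      from key[of v] show ?thesis
      proof
        assume z: "I (VAtom (snd (vcrule \<Pi> ! \<sigma> v)) v) = 0"
        have "J (VAtom (snd (vcrule \<Pi> ! \<sigma> v)) v) \<le> 0" using JI[of "VAtom (snd (vcrule \<Pi> ! \<sigma> v)) v"] z by simp
        moreover have "0 \<le> J (VAtom (fst (vcrule \<Pi> ! \<sigma> v)) v)" using iJ unfolding is_interp_def by blast
        ultimately show ?thesis using 2 sat_copy[OF iJ] by simp
      next
        assume p: "I (VAtom (snd (vcrule \<Pi> ! \<sigma> v)) v) > 0 \<and>
          I (VAtom (snd (vcrule \<Pi> ! \<sigma> v)) v) = I (VAtom (fst (vcrule \<Pi> ! \<sigma> v)) v)"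
        have "r \<in> coh \<Pi> I" unfolding coh_def 2 using p \<sigma>[of v] by blast
        then show ?thesis using Jm unfolding gap_model_def by blast
      qed
    qed
  qed
  have "I = J"
  proof (intro ext antisym)
    fix A
    show "J A \<le> I A" by (rule JI)
    show "I A \<le> J A" using MM_props(2)[OF hok_sigma[OF assms(1)] JPs] Ieq by simp
  qed
  then show "coherent_model \<Pi> I" unfolding coherent_model_def J_def using cm by simp
qed

end
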